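(* Let $(\mathfrak S_A,\mathfrak E_A,\epsilon^{\mathfrak S_A})$ and $(\mathfrak S_B,\mathfrak E_B,\epsilon^{\mathfrak S_B})$ be States/Effects Chu spaces whose spaces of states admit a description in terms of pure states. Then the set of completely meet-irreducible elements of $\mathfrak S_A\widetilde{\otimes}\mathfrak S_B$ equals $$\{\sigma_A\widetilde{\otimes}\sigma_B\mid\sigma_A\in\mathfrak S_A^{pure},\ \sigma_B\in\mathfrak S_B^{pure}\},$$ and this set equals the set of maximal elements of $\mathfrak S_A\widetilde{\otimes}\mathfrak S_B$.
   Context: The boolean domain is $\mathfrak{B}=\{Y,N,\bot\}$, ordered by $u\le v$ iff $u=\bot$ or $u=v$; nonempty infima $\bigwedge$: $Y$ (resp. $N$) if all members are $Y$ (resp. $N$), else $\bot$. Product $\bullet$: $x\bullet Y=x$, $x\bullet N=N$, $\bot\bullet\bot=\bot$ (commutative); involution $\overline{\bot}=\bot$, $\overline{Y}=N$, $\overline{N}=Y$. A space of states is a poset $(\mathfrak S,\sqsubseteq)$ with bottom $\bot_{\mathfrak S}$ in which every nonempty subset has an infimum. The natural space of effects $\mathfrak E_{\mathfrak S}$ consists of formal symbols $\mathfrak l_{(\sigma,\sigma')}$ ($\sigma,\sigma'$ with no common upper bound), $\mathfrak l_{(\sigma,\cdot)}$, $\mathfrak l_{(\cdot,\sigma)}$, $\mathfrak l_{(\cdot,\cdot)}$, with evaluation $\epsilon_{\mathfrak l_{(a,b)}}(\sigma)=Y$ if $a\sqsubseteq\sigma$, $N$ if $b\sqsubseteq\sigma$,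 $\bot$ otherwise ("$\cdot\sqsubseteq\sigma$" false), ordered by pointwise comparison of evaluations (nonempty infima exist and are pointwise). $\overline{\mathfrak l_{(a,b)}}=\mathfrak l_{(b,a)}$, $\mathfrak Y_{\mathfrak E}=\mathfrak l_{(\bot_{\mathfrak S},\cdot)}$, $\bot_{\mathfrak E}=\mathfrak l_{(\cdot,\cdot)}$. A States/Effects Chu space $(\mathfrak S,\mathfrak E,\epsilon)$: $\mathfrak E\subseteq\mathfrak E_{\mathfrak S}$ such that (i) each $\sigma\ne\bot_{\mathfrak S}$ has some $\sigma'\ne\bot_{\mathfrak S}$ with $\mathfrak l_{(\sigma,\sigma')}\in\mathfrak E$; (ii) $\mathfrak E$ is closed under nonempty infima of $\mathfrak E_{\mathfrak S}$; (iii) closed under bar; (iv) contains $\mathfrak Y_{\mathfrak E},\bot_{\mathfrak E}$. $\mathfrak S$ admits a description in terms of pure states if its set $\mathfrak S^{pure}$ of completely meet-irreducible elements equals its set of maximal elements and every $\sigma$ is the infimum of the pure states above it. The pure tensor $\sigma_A\widetilde{\otimes}\sigma_B$ is the map $\mathfrak E_A\times\mathfrak E_B\to\mathfrak B$, $(\mathfrak l_A,\mathfrak l_B)\mapsto\epsilon^{\mathfrak S_A}_{\mathfrak l_A}(\sigma_A)\bullet\epsilon^{\mathfrak S_B}_{\mathfrak l_B}(\sigma_B)$; the minimal tensor product $\mathfrak S_A\widetilde{\otimes}\mathfrak S_B$ is the set of pointwise infima of nonempty families of pure tensors, ordered pointwise (it is closed under infima of nonempty subsets). *)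

theory Defs
  imports Main
begin

datatype bdom = Y | N | Bot

definition leB :: "bdom \<Rightarrow> bdom \<Rightarrow> bool" where
  "leB u v \<longleftrightarrow> u = Bot \<or> u = v"

definition infB :: "bdom set \<Rightarrow> bdom" where
  "infB X = (if X = {Y} then Y else if X = {N} then N else Bot)"

fun prodB :: "bdom \<Rightarrow> bdom \<Rightarrow> bdom" where
  "prodB x Y = x"
| "prodB x N = N"
| "prodB Y Bot = Bot"
| "prodB N Bot = N"
| "prodB Bot Bot = Bot"

fun barB :: "bdom \<Rightarrow> bdom" where
  "barB Y = N" | "barB N = Y" | "barB Bot = Bot"

definition is_inf :: "'x set \<Rightarrow> ('x \<Rightarrow> 'x \<Rightarrow> bool) \<Rightarrow> 'x set \<Rightarrow> 'x \<Rightarrow> bool" where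
  "is_inf P le X i \<longleftrightarrow> i \<in> P \<and> (\<forall>x\<in>X. le i x) \<and> (\<forall>j\<in>P. (\<forall>x\<in>X. le j x) \<longrightarrow> le j i)"

definition cmi :: "'x set \<Rightarrow> ('x \<Rightarrow> 'x \<Rightarrow> bool) \<Rightarrow> 'x \<Rightarrow> bool" where
  "cmi P le x \<longleftrightarrow> x \<in> P \<and> (\<forall>X. X \<subseteq> P \<and> X \<noteq> {} \<and> is_inf P le X x \<longrightarrow> x \<in> X)"

definition maximal_in :: "'x set \<Rightarrow> ('x \<Rightarrow> 'x \<Rightarrow> bool) \<Rightarrow> 'x \<Rightarrow> bool" where
  "maximal_in P le x \<longleftrightarrow> x \<in> P \<and> (\<forall>y\<in>P. le x y \<longrightarrow> y = x)"

definition states_space :: "('a::order) itself \<Rightarrow> bool" where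
  "states_space _ \<longleftrightarrow> (\<exists>b::'a. \<forall>x. b \<le> x)
     \<and> (\<forall>X::'a set. X \<noteq> {} \<longrightarrow> (\<exists>i. is_inf UNIV (\<le>) X i))"

definition botS :: "'a::order" where
  "botS = (THE b. \<forall>x. b \<le> x)"

definition pure_states :: "('a::order) set" where
  "pure_states = {x. cmi UNIV (\<le>) x}"

definition pure_description :: "('a::order) itself \<Rightarrow> bool" where
  "pure_description _ \<longleftrightarrow>
     (pure_states :: 'a set) = {x. maximal_in UNIV (\<le>) x}
     \<and> (\<forall>s::'a. is_inf UNIV (\<le>) {p \<in> pure_states. s \<le> p} s)"

text \<open>The formal symbol l_(a,b) is represented by the pair (a,b) of optional states;
  None stands for the placeholder symbol.\<close>
type_synonym 'a eff = "'a option \<times> 'a option"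

fun below :: "'a::order option \<Rightarrow> 'a \<Rightarrow> bool" where
  "below None s = False"
| "below (Some a) s = (a \<le> s)"

fun evalE :: "'a::order eff \<Rightarrow> 'a \<Rightarrow> bdom" where
  "evalE (a, b) s = (if below a s then Y else if below b s then N else Bot)"

definition natural_effects :: "'a::order eff set" where
  "natural_effects = {(a, b). case (a, b) of
      (Some s, Some t) \<Rightarrow> \<not> (\<exists>u. s \<le> u \<and> t \<le> u)
    | _ \<Rightarrow> True}"

fun barE :: "'a eff \<Rightarrow> 'a eff" where
  "barE (a, b) = (b, a)"

text \<open>States/Effects Chu space (S, E, evaluation) with S the type 'a.\<close>
definition chu_space :: "('a::order) eff set \<Rightarrow> bool" where
  "chu_space E \<longleftrightarrow> states_space TYPE('a)
     \<and> E \<subseteq> natural_effects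
     \<and> (\<forall>s::'a. s \<noteq> botS \<longrightarrow> (\<exists>s'. s' \<noteq> botS \<and> (Some s, Some s') \<in> E))
     \<and> (\<forall>F. F \<subseteq> E \<and> F \<noteq> {} \<longrightarrow>
          (\<forall>g\<in>natural_effects. (\<forall>s. evalE g s = infB ((\<lambda>f. evalE f s) ` F)) \<longrightarrow> g \<in> E))
     \<and> (\<forall>e\<in>E. barE e \<in> E)
     \<and> (Some botS, None) \<in> E \<and> (None, None) \<in> E"

text \<open>Maps on E_A \<times> E_B; outside E_A \<times> E_B the value is fixed to Bot (irrelevant).\<close>
definition pure_tensor :: "('a::order) eff set \<Rightarrow> ('b::order) eff set \<Rightarrow> 'a \<Rightarrow> 'b
    \<Rightarrow> ('a eff \<times> 'b eff \<Rightarrow> bdom)" where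
  "pure_tensor EA EB sa sb = (\<lambda>(la, lb).
     if la \<in> EA \<and> lb \<in> EB then prodB (evalE la sa) (evalE lb sb) else Bot)"

definition pw_inf :: "('x \<Rightarrow> bdom) set \<Rightarrow> ('x \<Rightarrow> bdom)" where
  "pw_inf F = (\<lambda>x. infB ((\<lambda>f. f x) ` F))"

definition leT :: "('x \<Rightarrow> bdom) \<Rightarrow> ('x \<Rightarrow> bdom) \<Rightarrow> bool" where
  "leT f g \<longleftrightarrow> (\<forall>x. leB (f x) (g x))"

definition min_tensor :: "('a::order) eff set \<Rightarrow> ('b::order) eff set
    \<Rightarrow> ('a eff \<times> 'b eff \<Rightarrow> bdom) set" where
  "min_tensor EA EB = {pw_inf F | F. F \<noteq> {} \<and>
      F \<subseteq> {pure_tensor EA EB sa sb | sa sb. True}}"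

end

theory Submission
  imports Defs
begin

lemma leB_trans: "leB a b \<Longrightarrow> leB b c \<Longrightarrow> leB a c" by (auto simp: leB_def)
lemma leB_antisym: "leB a b \<Longrightarrow> leB b a \<Longrightarrow> a = b" by (auto simp: leB_def)
lemma leT_trans: "leT f g \<Longrightarrow> leT g h \<Longrightarrow> leT f h" unfolding leT_def using leB_trans by blast
lemma leT_antisym: "leT f g \<Longrightarrow> leT g f \<Longrightarrow> f = g" unfolding leT_def using leB_antisym by blast
lemma leT_refl: "leT f f" by (simp add: leT_def leB_def)

lemma infB_le: "v \<in> S \<Longrightarrow> leB (infB S) v"
  by (auto simp: infB_def leB_def)

lemma infB_eq: "infB S = v \<Longrightarrow> v \<noteq> Bot \<Longrightarrow> S = {v}"
  by (auto simp: infB_def split: if_splits)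

lemma pw_inf_le: "f \<in> F \<Longrightarrow> leT (pw_inf F) f"
  unfolding leT_def pw_inf_def using infB_le by blast

lemma pw_inf_glb: assumes "F \<noteq> {}" "\<forall>f\<in>F. leT j f" shows "leT j (pw_inf F)"
  unfolding leT_def pw_inf_def
proof
  fix x
  show "leB (j x) (infB ((\<lambda>f. f x) ` F))"
  proof (cases "j x = Bot")
    case True then show ?thesis by (simp add: leB_def)
  next
    case False
    then have "(\<lambda>f. f x) ` F = {j x}" using assms by (auto simp: leT_def leB_def) metis+
    then show ?thesis using False by (cases "j x") (auto simp: infB_def leB_def)
  qed
qed

lemma pw_inf_single: "pw_inf {f} = f"
  unfolding pw_inf_def
proof (rule ext)
  fix x show "infB ((\<lambda>f. f x) ` {f}) = f x" by (cases "f x") (simp_all add: infB_def)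
qed

lemma prodB_Y: "prodB x y = Y \<longleftrightarrow> x = Y \<and> y = Y" by (cases x; cases y) auto
lemma prodB_N: "prodB x y = N \<longleftrightarrow> x = N \<or> y = N" by (cases x; cases y) auto
lemma prodB_Yl: "prodB Y y = y" by (cases y) auto

lemma prodB_mono: "leB x x' \<Longrightarrow> leB y y' \<Longrightarrow> leB (prodB x y) (prodB x' y')"
  by (cases x; cases y; cases x'; cases y') (auto simp: leB_def)

lemma evalE_mono:
  assumes "l \<in> natural_effects" "(s::'a::order) \<le> s'"
  shows "leB (evalE l s) (evalE l s')"
proof -
  obtain a b where l: "l = (a,b)" by (cases l)
  show ?thesis
  proof (cases a)
    case None then show ?thesis using l assms(2)
      by (cases b) (auto simp: leB_def intro: order_trans)
  next
    case (Some a')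
    show ?thesis
    proof (cases b)
      case None then show ?thesis using l Some assms(2) by (auto simp: leB_def intro: order_trans)
    next
      case (Some b')
      have "\<not> (a' \<le> s' \<and> b' \<le> s')" using assms(1) l \<open>a = Some a'\<close> Some
        by (auto simp: natural_effects_def)
      then show ?thesis using l Some \<open>a = Some a'\<close> assms(2)
        by (auto simp: leB_def intro: order_trans)
    qed
  qed
qed

lemma tensor_mono:
  assumes "EA \<subseteq> natural_effects" "EB \<subseteq> natural_effects"
    "(sa::'a::order) \<le> sa'" "(sb::'b::order) \<le> sb'"
  shows "leT (pure_tensor EA EB sa sb) (pure_tensor EA EB sa' sb')"
  unfolding leT_def pure_tensor_def
proof
  fix x :: "'a eff \<times> 'b eff"
  obtain la lb where x: "x = (la, lb)" by (cases x)
  show "leB (case x of (la, lb) \<Rightarrow> if la \<in> EA \<and> lb \<in> EB then prodB (evalE la sa) (evalE lb sb) else Bot)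
          (case x of (la, lb) \<Rightarrow> if la \<in> EA \<and> lb \<in> EB then prodB (evalE la sa') (evalE lb sb') else Bot)"
  proof (cases "la \<in> EA \<and> lb \<in> EB")
    case True
    have "leB (prodB (evalE la sa) (evalE lb sb)) (prodB (evalE la sa') (evalE lb sb'))"
      by (rule prodB_mono; rule evalE_mono) (use True assms in auto)
    then show ?thesis using x True by simp
  qed (use x in \<open>auto simp: leB_def\<close>)
qed

lemma pure_above:
  assumes "pure_description TYPE('a::order)"
  shows "\<exists>p\<in>(pure_states::'a set). s \<le> p"
proof (rule ccontr)
  assume h: "\<not> ?thesis"
  have inf: "is_inf UNIV (\<le>) {p \<in> pure_states. s \<le> p} s"
    using assms unfolding pure_description_def by blast
  have "{p \<in> pure_states. s \<le> p} = {}" using h by blast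
  hence top: "\<forall>j. j \<le> s" using inf by (auto simp: is_inf_def)
  have "maximal_in UNIV (\<le>) s" unfolding maximal_in_def using top antisym by blast
  hence "s \<in> pure_states" using assms unfolding pure_description_def by blast
  thus False using h by blast
qed

lemma pure_max:
  assumes "pure_description TYPE('a::order)" "(p::'a) \<in> pure_states" "p \<le> y"
  shows "y = p"
proof -
  have "maximal_in UNIV (\<le>) p" using assms(1,2) unfolding pure_description_def by blast
  thus ?thesis using assms(3) unfolding maximal_in_def by blast
qed

lemma botS_le:
  assumes "states_space TYPE('a::order)"
  shows "botS \<le> (x::'a)"
proof -
  obtain b :: 'a where b: "\<forall>x. b \<le> x" using assms unfolding states_space_def by blast
  have "botS = b" unfolding botS_def
    by (rule the_equality) (use b in \<open>auto intro: antisym\<close>)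
  thus ?thesis using b by simp
qed

lemma evalE_from_pure:
  fixes s :: "'a::order"
  assumes pd: "pure_description TYPE('a)" and v: "v \<noteq> Bot"
    and all: "\<forall>p\<in>pure_states. s \<le> p \<longrightarrow> evalE l p = v"
  shows "evalE l s = v"
proof -
  obtain a b where l: "l = (a,b)" by (cases l)
  have inf: "is_inf UNIV (\<le>) {p \<in> pure_states. s \<le> p} s"
    using pd unfolding pure_description_def by blast
  obtain p0 where p0: "p0 \<in> pure_states" "s \<le> p0" using pure_above[OF pd] by blast
  show ?thesis
  proof (cases v)
    case Y
    then have A: "\<forall>p\<in>pure_states. s \<le> p \<longrightarrow> below a p" using all l by (auto split: if_splits)
    then obtain a' where a: "a = Some a'" using p0 by (cases a) auto
    have "\<forall>p\<in>{p \<in> pure_states. s \<le> p}. a' \<le> p" using A a by auto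
    then have "a' \<le> s" using inf by (simp add: is_inf_def)
    then show ?thesis using l a Y by simp
  next
    case N
    then have A: "\<forall>p\<in>pure_states. s \<le> p \<longrightarrow> \<not> below a p \<and> below b p" using all l
      by (auto split: if_splits)
    then obtain b' where b: "b = Some b'" using p0 by (cases b) auto
    have "\<forall>p\<in>{p \<in> pure_states. s \<le> p}. b' \<le> p" using A b by auto
    then have bs: "b' \<le> s" using inf by (simp add: is_inf_def)
    have "\<not> below a p0" using A p0 by blast
    then have "\<not> below a s" using p0 by (cases a) (auto intro: order_trans)
    then show ?thesis using l b bs N by simp
  next
    case Bot then show ?thesis using v by simp
  qed
qed

lemma chu_nat: "chu_space E \<Longrightarrow> E \<subseteq> natural_effects" by (simp add: chu_space_def)

lemma rigid_A:
  fixes EA :: "('a::order) eff set" and EB :: "('b::order) eff set"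
  assumes cA: "chu_space EA" and cB: "chu_space EB" and pdA: "pure_description TYPE('a)"
    and pa: "pa \<in> pure_states"
    and le: "leT (pure_tensor EA EB pa pb) (pure_tensor EA EB sa sb)"
  shows "sa = pa"
proof -
  have yB: "(Some botS, None) \<in> EB" using cB by (simp add: chu_space_def)
  have botB: "\<forall>x::'b. botS \<le> x" using cB botS_le by (auto simp: chu_space_def)
  have "pa \<le> sa"
  proof (cases "pa = botS")
    case True then show ?thesis using cA botS_le by (auto simp: chu_space_def)
  next
    case False
    then obtain s' where s': "(Some pa, Some s') \<in> EA" using cA by (auto simp: chu_space_def)
    have "leB (pure_tensor EA EB pa pb ((Some pa, Some s'), (Some botS, None)))
               (pure_tensor EA EB sa sb ((Some pa, Some s'), (Some botS, None)))"
      using le by (simp add: leT_def)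
    then have "prodB (evalE (Some pa, Some s') sa) Y = Y"
      using s' yB botB by (simp add: pure_tensor_def leB_def)
    then show ?thesis by (auto split: if_splits)
  qed
  then show ?thesis using pure_max[OF pdA pa] by blast
qed

lemma rigid_B:
  fixes EA :: "('a::order) eff set" and EB :: "('b::order) eff set"
  assumes cA: "chu_space EA" and cB: "chu_space EB" and pdB: "pure_description TYPE('b)"
    and pb: "pb \<in> pure_states"
    and le: "leT (pure_tensor EA EB pa pb) (pure_tensor EA EB sa sb)"
  shows "sb = pb"
proof -
  have yA: "(Some botS, None) \<in> EA" using cA by (simp add: chu_space_def)
  have botA: "\<forall>x::'a. botS \<le> x" using cA botS_le by (auto simp: chu_space_def)
  have "pb \<le> sb"
  proof (cases "pb = botS")
    case True then show ?thesis using cB botS_le by (auto simp: chu_space_def)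
  next
    case False
    then obtain s' where s': "(Some pb, Some s') \<in> EB" using cB by (auto simp: chu_space_def)
    have "leB (pure_tensor EA EB pa pb ((Some botS, None), (Some pb, Some s')))
               (pure_tensor EA EB sa sb ((Some botS, None), (Some pb, Some s')))"
      using le by (simp add: leT_def)
    then have "prodB Y (evalE (Some pb, Some s') sb) = Y"
      using s' yA botA by (simp add: pure_tensor_def leB_def prodB_Yl)
    then show ?thesis by (auto simp: prodB_Yl split: if_splits)
  qed
  then show ?thesis using pure_max[OF pdB pb] by blast
qed

lemma pure_tensor_in: "pure_tensor EA EB sa sb \<in> min_tensor EA EB"
  unfolding min_tensor_def
  by (rule CollectI, rule exI[of _ "{pure_tensor EA EB sa sb}"]) (auto simp: pw_inf_single)

lemma above_pure:
  fixes EA :: "('a::order) eff set" and EB :: "('b::order) eff set"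
  assumes cA: "chu_space EA" and cB: "chu_space EB"
    and pdA: "pure_description TYPE('a)" and pdB: "pure_description TYPE('b)"
    and pa: "pa \<in> pure_states" and pb: "pb \<in> pure_states"
    and t: "t \<in> min_tensor EA EB" and le: "leT (pure_tensor EA EB pa pb) t"
  shows "t = pure_tensor EA EB pa pb"
proof -
  obtain F where F: "t = pw_inf F" "F \<noteq> {}" "F \<subseteq> {pure_tensor EA EB sa sb | sa sb. True}"
    using t unfolding min_tensor_def by blast
  have "F = {pure_tensor EA EB pa pb}"
  proof -
    have "\<forall>f\<in>F. f = pure_tensor EA EB pa pb"
    proof
      fix f assume f: "f \<in> F"
      then obtain sa sb where fs: "f = pure_tensor EA EB sa sb" using F(3) by blast
      have "leT (pure_tensor EA EB pa pb) f" using leT_trans[OF le] pw_inf_le[OF f] F(1) by simp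
      then have "sa = pa" "sb = pb" using rigid_A[OF cA cB pdA pa] rigid_B[OF cA cB pdB pb] fs by blast+
      then show "f = pure_tensor EA EB pa pb" using fs by simp
    qed
    then show ?thesis using F(2) by auto
  qed
  then show ?thesis using F(1) pw_inf_single by simp
qed

lemma key_pointwise:
  fixes EA :: "('a::order) eff set" and EB :: "('b::order) eff set"
  assumes pdA: "pure_description TYPE('a)" and pdB: "pure_description TYPE('b)"
    and v: "v \<noteq> Bot"
    and all: "\<forall>pa\<in>pure_states. \<forall>pb\<in>pure_states. sa \<le> pa \<longrightarrow> sb \<le> pb \<longrightarrow>
                 pure_tensor EA EB pa pb z = v"
  shows "pure_tensor EA EB sa sb z = v"
proof -
  obtain la lb where z: "z = (la, lb)" by (cases z)
  obtain pa0 where pa0: "pa0 \<in> pure_states" "sa \<le> pa0" using pure_above[OF pdA] by blast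
  obtain pb0 where pb0: "pb0 \<in> pure_states" "sb \<le> pb0" using pure_above[OF pdB] by blast
  have inE: "la \<in> EA \<and> lb \<in> EB"
  proof (rule ccontr)
    assume "\<not> ?thesis"
    then have "pure_tensor EA EB pa0 pb0 z = Bot" using z by (auto simp: pure_tensor_def)
    then show False using all pa0 pb0 v by metis
  qed
  have all2: "\<forall>pa\<in>pure_states. \<forall>pb\<in>pure_states. sa \<le> pa \<longrightarrow> sb \<le> pb \<longrightarrow>
                 prodB (evalE la pa) (evalE lb pb) = v"
    using all inE z by (simp add: pure_tensor_def)
  show ?thesis
  proof (cases v)
    case Y
    have "\<forall>pa\<in>pure_states. sa \<le> pa \<longrightarrow> evalE la pa = Y" using all2 pb0 Y by (auto simp: prodB_Y)
    then have a: "evalE la sa = Y" using evalE_from_pure[OF pdA] by blast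
    have "\<forall>pb\<in>pure_states. sb \<le> pb \<longrightarrow> evalE lb pb = Y" using all2 pa0 Y by (auto simp: prodB_Y)
    then have b: "evalE lb sb = Y" using evalE_from_pure[OF pdB] by blast
    show ?thesis using a b inE z Y by (simp add: pure_tensor_def)
  next
    case N
    have "evalE la sa = N \<or> evalE lb sb = N"
    proof (rule ccontr)
      assume h: "\<not> ?thesis"
      obtain pa where pa: "pa \<in> pure_states" "sa \<le> pa" "evalE la pa \<noteq> N"
        using h evalE_from_pure[OF pdA, of N sa la] by auto
      obtain pb where pb: "pb \<in> pure_states" "sb \<le> pb" "evalE lb pb \<noteq> N"
        using h evalE_from_pure[OF pdB, of N sb lb] by auto
      have "prodB (evalE la pa) (evalE lb pb) = N" using all2 pa pb N by blast
      then show False using pa pb by (simp add: prodB_N)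
    qed
    then show ?thesis using inE z N by (auto simp: pure_tensor_def prodB_N)
  next
    case Bot then show ?thesis using v by simp
  qed
qed

theorem mainTheorem6:
  fixes EA :: "('a::order) eff set" and EB :: "('b::order) eff set"
  assumes "chu_space EA" and "chu_space EB"
    and "pure_description TYPE('a)" and "pure_description TYPE('b)"
  shows "{t. cmi (min_tensor EA EB) leT t}
           = {pure_tensor EA EB sa sb | sa sb. sa \<in> pure_states \<and> sb \<in> pure_states}
       \<and> {pure_tensor EA EB sa sb | sa sb. sa \<in> pure_states \<and> sb \<in> pure_states}
           = {t. maximal_in (min_tensor EA EB) leT t}"
proof -
  note cA = assms(1) and cB = assms(2) and pdA = assms(3) and pdB = assms(4)
  have nA: "EA \<subseteq> natural_effects" and nB: "EB \<subseteq> natural_effects"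
    using cA cB by (simp_all add: chu_space_def)
  let ?M = "min_tensor EA EB"
  let ?PT = "{pure_tensor EA EB sa sb | sa sb. sa \<in> pure_states \<and> sb \<in> pure_states}"
  have below_pt: "\<exists>pa\<in>pure_states. \<exists>pb\<in>pure_states. leT t (pure_tensor EA EB pa pb)"
    if t: "t \<in> ?M" for t
  proof -
    obtain F where F: "t = pw_inf F" "F \<noteq> {}" "F \<subseteq> {pure_tensor EA EB sa sb | sa sb. True}"
      using t unfolding min_tensor_def by blast
    obtain f where f: "f \<in> F" using F(2) by blast
    then obtain sa sb where fs: "f = pure_tensor EA EB sa sb" using F(3) by blast
    obtain pa where pa: "pa \<in> pure_states" "sa \<le> pa" using pure_above[OF pdA] by blast
    obtain pb where pb: "pb \<in> pure_states" "sb \<le> pb" using pure_above[OF pdB] by blast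
    have "leT t (pure_tensor EA EB pa pb)"
      using leT_trans[OF pw_inf_le[OF f], of "pure_tensor EA EB pa pb"]
        tensor_mono[OF nA nB pa(2) pb(2)] F(1) fs by simp
    then show ?thesis using pa pb by blast
  qed
  have PT_max: "?PT \<subseteq> {t. maximal_in ?M leT t}"
  proof
    fix t assume "t \<in> ?PT"
    then obtain pa pb where p: "pa \<in> pure_states" "pb \<in> pure_states" "t = pure_tensor EA EB pa pb"
      by blast
    show "t \<in> {t. maximal_in ?M leT t}"
      using p pure_tensor_in above_pure[OF cA cB pdA pdB p(1,2)] by (auto simp: maximal_in_def)
  qed
  have max_PT: "{t. maximal_in ?M leT t} \<subseteq> ?PT"
  proof
    fix t assume "t \<in> {t. maximal_in ?M leT t}"
    then have t: "t \<in> ?M" "\<forall>y\<in>?M. leT t y \<longrightarrow> y = t" by (auto simp: maximal_in_def)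
    obtain pa pb where p: "pa \<in> pure_states" "pb \<in> pure_states" "leT t (pure_tensor EA EB pa pb)"
      using below_pt[OF t(1)] by blast
    then have "pure_tensor EA EB pa pb = t" using t(2) pure_tensor_in by blast
    then show "t \<in> ?PT" using p by blast
  qed
  have PT_cmi: "?PT \<subseteq> {t. cmi ?M leT t}"
  proof
    fix t assume "t \<in> ?PT"
    then obtain pa pb where p: "pa \<in> pure_states" "pb \<in> pure_states" "t = pure_tensor EA EB pa pb"
      by blast
    have "t \<in> X" if X: "X \<subseteq> ?M" "X \<noteq> {}" "is_inf ?M leT X t" for X
    proof -
      obtain x where x: "x \<in> X" using X(2) by blast
      have "leT t x" using X(3) x by (simp add: is_inf_def)
      then have "x = t" using above_pure[OF cA cB pdA pdB p(1,2)] X(1) x p(3) by blast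
      then show ?thesis using x by simp
    qed
    then show "t \<in> {t. cmi ?M leT t}" using p pure_tensor_in by (auto simp: cmi_def)
  qed
  have cmi_PT: "{t. cmi ?M leT t} \<subseteq> ?PT"
  proof
    fix t assume "t \<in> {t. cmi ?M leT t}"
    then have tM: "t \<in> ?M" and tc: "\<And>X. X \<subseteq> ?M \<Longrightarrow> X \<noteq> {} \<Longrightarrow> is_inf ?M leT X t \<Longrightarrow> t \<in> X"
      by (auto simp: cmi_def)
    obtain F where F: "t = pw_inf F" "F \<noteq> {}" "F \<subseteq> {pure_tensor EA EB sa sb | sa sb. True}"
      using tM unfolding min_tensor_def by blast
    define X where "X = {pure_tensor EA EB pa pb | pa pb. pa \<in> pure_states \<and> pb \<in> pure_states
                            \<and> leT t (pure_tensor EA EB pa pb)}"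
    have XM: "X \<subseteq> ?M" unfolding X_def using pure_tensor_in by blast
    have Xne: "X \<noteq> {}" unfolding X_def using below_pt[OF tM] by blast
    have Xt: "leT (pw_inf X) t" unfolding leT_def
    proof
      fix z
      show "leB (pw_inf X z) (t z)"
      proof (cases "pw_inf X z = Bot")
        case True then show ?thesis by (simp add: leB_def)
      next
        case False
        define v where "v = pw_inf X z"
        have vX: "\<forall>x\<in>X. x z = v" using infB_eq[of "(\<lambda>f. f z) ` X" v] False
          unfolding v_def pw_inf_def by auto
        have "\<forall>f\<in>F. f z = v"
        proof
          fix f assume f: "f \<in> F"
          then obtain sa sb where fs: "f = pure_tensor EA EB sa sb" using F(3) by blast
          have "\<forall>pa\<in>pure_states. \<forall>pb\<in>pure_states. sa \<le> pa \<longrightarrow> sb \<le> pb \<longrightarrow>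
                 pure_tensor EA EB pa pb z = v"
          proof (intro ballI impI)
            fix pa pb assume "pa \<in> pure_states" "pb \<in> pure_states" "sa \<le> pa" "sb \<le> pb"
            moreover have "leT t (pure_tensor EA EB pa pb)"
              using leT_trans[OF pw_inf_le[OF f], of "pure_tensor EA EB pa pb"]
                tensor_mono[OF nA nB \<open>sa \<le> pa\<close> \<open>sb \<le> pb\<close>] F(1) fs
              by simp
            ultimately have "pure_tensor EA EB pa pb \<in> X" unfolding X_def by blast
            then show "pure_tensor EA EB pa pb z = v" using vX by blast
          qed
          then show "f z = v" using key_pointwise[OF pdA pdB] False fs unfolding v_def by blast
        qed
        then have "(\<lambda>f. f z) ` F = {v}" using F(2) by auto
        then have "t z = v" using F(1) False unfolding v_def pw_inf_def
          by (cases v) (auto simp: infB_def)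
        then show ?thesis by (simp add: v_def leB_def)
      qed
    qed
    have "is_inf ?M leT X t"
      unfolding is_inf_def
    proof (intro conjI ballI impI)
      show "t \<in> ?M" by (rule tM)
    next
      fix x assume "x \<in> X" then show "leT t x" unfolding X_def by blast
    next
      fix j assume "j \<in> ?M" "\<forall>x\<in>X. leT j x"
      then show "leT j t" using leT_trans[OF pw_inf_glb[OF Xne] Xt] by blast
    qed
    then have "t \<in> X" using tc XM Xne by blast
    then show "t \<in> ?PT" unfolding X_def by blast
  qed
  show ?thesis using PT_max max_PT PT_cmi cmi_PT by blast
qed

end
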